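(* Let $\sigma,\eta>0$ and $\mathscr{C}$ be a family of balls as in the context. Let $B\in\mathscr{C}$ and $n\in\{0,1,2,\dots\}$. Suppose $B_1=B(x_1,r_1)\in P^{(n)}$ and $B_2=B(x_2,r_2)$ is a ball of the $(n+4)$-th layer of $B$, i.e. $B_2\in\mathscr{C}$ with $B_2\subset B^{(n+4)}$ and $B_2\not\subset B^{(n+3)}$. Then \[ \operatorname{dist}(B_1,B_2)\geq\max\{\kappa(r_1+r_2),1\},\qquad \kappa:=\sqrt{1+2/\eta^2}-1. \]
   Context: Cover: for constants $\sigma,\eta>0$, $\mathscr{C}$ is a family of closed balls in $\mathbb{R}^3$ with $\bigcup_{B\in\mathscr{C}}B=\mathbb{R}^3$ and $|B|\geq 4\pi/3$ (i.e. radius $\ge1$) for all $B\in\mathscr{C}$, such that (i) each ball in $\mathscr{C}$ intersects at most $\sigma$ balls in $\mathscr{C}$, and (ii) if $B,B'\in\mathscr{C}$ intersect then $\eta^{-1}\le |B|^{1/3}/|B'|^{1/3}\le\eta$. Layers: for $B\in\mathscr{C}$ set $B^{(0)}:=B$, $P^{(0)}:=\{B\}$, and for $n\ge1$, $P^{(n)}:=\{B'\in\mathscr{C}: B'\cap B^{(n-1)}\neq\emptyset\}$, $B^{(n)}:=\bigcup_{B'\in P^{(n)}}B'$. *)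

theory Defs
  imports "HOL-Analysis.Analysis"
begin

definition ball_cover :: "real \<Rightarrow> real \<Rightarrow> (real^3) set set \<Rightarrow> bool" where
  "ball_cover \<sigma> \<eta> \<C> \<longleftrightarrow>
     (\<forall>B\<in>\<C>. \<exists>x r. B = cball x r) \<and>
     \<Union>\<C> = UNIV \<and>
     (\<forall>B\<in>\<C>. measure lebesgue B \<ge> 4 * pi / 3) \<and>
     (\<forall>B\<in>\<C>. finite {B'\<in>\<C>. B \<inter> B' \<noteq> {}} \<and> real (card {B'\<in>\<C>. B \<inter> B' \<noteq> {}}) \<le> \<sigma>) \<and>
     (\<forall>B\<in>\<C>. \<forall>B'\<in>\<C>. B \<inter> B' \<noteq> {} \<longrightarrow>
        inverse \<eta> \<le> measure lebesgue B powr (1/3) / measure lebesgue B' powr (1/3) \<and>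
        measure lebesgue B powr (1/3) / measure lebesgue B' powr (1/3) \<le> \<eta>)"

fun layerB :: "(real^3) set set \<Rightarrow> (real^3) set \<Rightarrow> nat \<Rightarrow> (real^3) set" where
  "layerB \<C> B 0 = B"
| "layerB \<C> B (Suc n) = \<Union>{B'\<in>\<C>. B' \<inter> layerB \<C> B n \<noteq> {}}"

fun layerP :: "(real^3) set set \<Rightarrow> (real^3) set \<Rightarrow> nat \<Rightarrow> (real^3) set set" where
  "layerP \<C> B 0 = {B}"
| "layerP \<C> B (Suc n) = {B'\<in>\<C>. B' \<inter> layerB \<C> B n \<noteq> {}}"

end

theory Submission imports Defs "HOL-Analysis.Analysis" begin


lemma cov_ball: "ball_cover \<sigma> \<eta> \<C> \<Longrightarrow> G \<in> \<C> \<Longrightarrow> \<exists>x r. G = cball x r"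
  unfolding ball_cover_def by meson
lemma cov_univ: "ball_cover \<sigma> \<eta> \<C> \<Longrightarrow> \<exists>G\<in>\<C>. y \<in> G"
  unfolding ball_cover_def by (metis UNIV_I Union_iff)
lemma cov_meas: "ball_cover \<sigma> \<eta> \<C> \<Longrightarrow> G \<in> \<C> \<Longrightarrow> measure lebesgue G \<ge> 4 * pi / 3"
  unfolding ball_cover_def by meson
lemma cov_fin: "ball_cover \<sigma> \<eta> \<C> \<Longrightarrow> G \<in> \<C> \<Longrightarrow> finite {B'\<in>\<C>. G \<inter> B' \<noteq> {}}"
  unfolding ball_cover_def by meson
lemma cov_ratio: "ball_cover \<sigma> \<eta> \<C> \<Longrightarrow> G \<in> \<C> \<Longrightarrow> G' \<in> \<C> \<Longrightarrow> G \<inter> G' \<noteq> {} \<Longrightarrow>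
   inverse \<eta> \<le> measure lebesgue G powr (1/3) / measure lebesgue G' powr (1/3)"
  unfolding ball_cover_def by meson

lemma meas_cball: "r \<ge> 0 \<Longrightarrow> measure lebesgue (cball (c::real^3) r) = 4/3*pi*r^3"
  by (simp add: content_cball unit_ball_vol_3)

lemma cube_root: "(r::real) \<ge> 0 \<Longrightarrow> (4/3*pi*r^3) powr (1/3) = (4/3*pi) powr (1/3) * r"
proof -
  assume r: "r \<ge> 0"
  have "(4/3*pi*r^3) powr (1/3) = (4/3*pi) powr (1/3) * (r^3) powr (1/3)"
    using r by (subst powr_mult[symmetric]) (auto simp: mult.assoc)
  moreover have "(r^3) powr (1/3) = r"
  proof (cases "r = 0")
    case False
    then have "r > 0" using r by simp
    then have "r^3 = r powr 3" by (simp add: powr_realpow)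
    then have "(r^3) powr (1/3) = r powr (3 * (1/3))" by (simp add: powr_powr)
    also have "\<dots> = r" using \<open>r > 0\<close> by simp
    finally show ?thesis .
  qed simp
  ultimately show ?thesis by simp
qed

lemma radius_ge1:
  assumes "ball_cover \<sigma> \<eta> \<C>" "cball c r \<in> \<C>"
  shows "r \<ge> 1"
proof (rule ccontr)
  assume "\<not> r \<ge> 1"
  have m: "measure lebesgue (cball c r) \<ge> 4*pi/3" using cov_meas[OF assms] by simp
  show False
  proof (cases "r < 0")
    case True
    then have "cball c r = {}" by simp
    then show False using m pi_gt_zero by simp
  next
    case False
    then have "r^3 < 1^3" using \<open>\<not> r \<ge> 1\<close> by (intro power_strict_mono) auto
    then have "4/3*pi*r^3 < 4/3*pi*1" using pi_gt_zero by (intro mult_strict_left_mono) auto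
    then show False using m meas_cball[of r c] False by simp
  qed
qed

lemma radius_ratio:
  assumes "ball_cover \<sigma> \<eta> \<C>" "cball c r \<in> \<C>" "cball c' r' \<in> \<C>"
    "cball c r \<inter> cball c' r' \<noteq> {}"
  shows "r' / \<eta> \<le> r"
proof -
  have r: "r \<ge> 1" and r': "r' \<ge> 1" using radius_ge1 assms by blast+
  have "inverse \<eta> \<le> measure lebesgue (cball c r) powr (1/3) / measure lebesgue (cball c' r') powr (1/3)"
    using cov_ratio[OF assms] .
  also have "\<dots> = r / r'"
    using r r' pi_gt_zero by (simp only: meas_cball cube_root) (auto simp: powr_gt_zero)
  finally have "inverse \<eta> \<le> r / r'" .
  then have "inverse \<eta> * r' \<le> r" using r' by (simp add: field_simps)
  then show ?thesis by (simp add: divide_inverse mult.commute)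
qed



lemma locfin:
  assumes cov: "ball_cover \<sigma> \<eta> \<C>" and S: "S \<subseteq> cball w R"
  shows "finite {G\<in>\<C>. G \<inter> S \<noteq> {}}"
proof -
  have "seq_compact (cball w (R+1))" by (rule compact_imp_seq_compact) (rule compact_cball)
  from seq_compact_imp_totally_bounded[OF this]
  obtain Y where Y: "finite Y" "cball w (R+1) \<subseteq> (\<Union>y\<in>Y. ball y 1)"
    by (meson zero_less_one)
  have sub: "{G\<in>\<C>. G \<inter> S \<noteq> {}} \<subseteq> (\<Union>y\<in>Y. {G\<in>\<C>. y \<in> G})"
  proof
    fix G assume "G \<in> {G\<in>\<C>. G \<inter> S \<noteq> {}}"
    then obtain g where G: "G \<in> \<C>" "g \<in> G" "g \<in> S" by auto
    obtain c \<rho> where Gc: "G = cball c \<rho>" using cov_ball[OF cov G(1)] by blast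
    have \<rho>: "\<rho> \<ge> 1" using radius_ge1[OF cov] G Gc by blast
    define c' where "c' = g + (1/\<rho>) *\<^sub>R (c - g)"
    have gc: "dist c g \<le> \<rho>" using G(2) unfolding Gc by simp
    have "c' - g = (1/\<rho>) *\<^sub>R (c - g)" by (simp add: c'_def)
    then have "norm (c' - g) = (1/\<rho>) * norm (c - g)" using \<rho> by simp
    moreover have "dist g c' = norm (c' - g)" by (metis dist_norm dist_commute)
    moreover have "dist c g = norm (c - g)" by (rule dist_norm)
    ultimately have "dist g c' = dist c g / \<rho>" by simp
    also have "\<dots> \<le> 1" using gc \<rho> by simp
    finally have gc': "dist g c' \<le> 1" .
    have "dist w g \<le> R" using G S by auto
    then have "dist w c' \<le> R + 1" using gc' dist_triangle[of w c' g] by linarith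
    then have "c' \<in> cball w (R+1)" by simp
    then obtain y where y0: "y \<in> Y" "c' \<in> ball y 1" using Y(2) by blast
    then have y: "y \<in> Y" "dist y c' < 1" by auto
    have "c - c' = (c - g) - (1/\<rho>) *\<^sub>R (c - g)" by (simp add: c'_def)
    also have "\<dots> = (1 - 1/\<rho>) *\<^sub>R (c - g)" by (simp add: scaleR_diff_left)
    finally have "c - c' = (1 - 1/\<rho>) *\<^sub>R (c - g)" .
    then have "norm (c - c') = \<bar>1 - 1/\<rho>\<bar> * norm (c - g)" by simp
    then have "dist c c' = (1 - 1/\<rho>) * dist c g" using \<rho> by (simp add: dist_norm)
    also have "\<dots> \<le> (1 - 1/\<rho>) * \<rho>" using gc \<rho> by (intro mult_left_mono) auto
    also have "\<dots> = \<rho> - 1" using \<rho> by (simp add: field_simps)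
    finally have "dist c c' \<le> \<rho> - 1" .
    moreover have "dist c y \<le> dist c c' + dist c' y" by (rule dist_triangle)
    moreover have "dist c' y = dist y c'" by (rule dist_commute)
    ultimately have "dist c y \<le> \<rho>" using y by linarith
    then have "y \<in> G" using Gc by simp
    then show "G \<in> (\<Union>y\<in>Y. {G\<in>\<C>. y \<in> G})" using y(1) G(1) by blast
  qed
  have "finite {G\<in>\<C>. y \<in> G}" for y
  proof -
    obtain E where E: "E \<in> \<C>" "y \<in> E" using cov_univ[OF cov] by blast
    then have "finite {B'\<in>\<C>. E \<inter> B' \<noteq> {}}" using cov_fin[OF cov] by blast
    moreover have "{G\<in>\<C>. y \<in> G} \<subseteq> {B'\<in>\<C>. E \<inter> B' \<noteq> {}}" using E by auto
    ultimately show ?thesis by (rule finite_subset[rotated])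
  qed
  then have "finite (\<Union>y\<in>Y. {G\<in>\<C>. y \<in> G})" using Y(1) by blast
  then show ?thesis using sub by (rule finite_subset[rotated])
qed



lemma alg:
  fixes A B w E2 \<rho> r1 r2 c1 c2 :: real
  assumes "A > 0" "B > 0" "E2 \<le> \<rho>^2"
    "A^2 - 2*A*w + E2 > (r1+\<rho>)^2" "B^2 + 2*B*w + E2 > (r2+\<rho>)^2"
    "c1^2 \<le> r1^2 + 2*r1*\<rho>" "c2^2 \<le> r2^2 + 2*r2*\<rho>"
  shows "A + B > c1 + c2"
proof -
  have "A^2 - c1^2 > 2*A*w" using assms(3,4,6) by (simp add: power2_sum) 
  moreover have "c1^2 \<ge> 2*A*c1 - A^2" using zero_le_power2[of "A - c1"] unfolding power2_diff by linarith
  ultimately have "2*A*(A - c1) > 2*A*w" by (simp add: algebra_simps power2_eq_square)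
  then have 1: "A - c1 > w" using assms(1) by simp
  have "B^2 - c2^2 > -2*B*w" using assms(3,5,7) by (simp add: power2_sum) 
  moreover have "c2^2 \<ge> 2*B*c2 - B^2" using zero_le_power2[of "B - c2"] unfolding power2_diff by linarith
  ultimately have "2*B*(B - c2) > 2*B*(-w)" by (simp add: algebra_simps power2_eq_square)
  then have "B*(-w) < B*(B - c2)" by simp
  then have 2: "B - c2 > -w" using assms(2) mult_less_cancel_left_pos by blast
  show ?thesis using 1 2 by linarith
qed

lemma disj_dist:
  fixes a b :: "'a::euclidean_space"
  assumes "cball a r \<inter> cball b s = {}" "r \<ge> 0" "s \<ge> 0"
  shows "dist a b > r + s"
proof (rule ccontr)
  assume "\<not> dist a b > r + s"
  then have le: "dist a b \<le> r + s" by simp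
  have rs: "r + s > 0"
  proof (rule ccontr)
    assume "\<not> r + s > 0"
    then have "r = 0" "s = 0" using assms by auto
    then have "a = b" using le by simp
    then show False using assms \<open>r = 0\<close> \<open>s = 0\<close> by auto
  qed
  define p where "p = a + (r/(r+s)) *\<^sub>R (b - a)"
  have "p - a = (r/(r+s)) *\<^sub>R (b - a)" by (simp add: p_def)
  then have "norm (p - a) = (r/(r+s)) * norm (b - a)" using rs assms by simp
  then have "dist a p = (r/(r+s)) * dist a b" by (metis dist_norm dist_commute)
  also have "\<dots> \<le> (r/(r+s)) * (r+s)" using le rs assms by (intro mult_left_mono) auto
  also have "\<dots> = r" using rs by simp
  finally have 1: "p \<in> cball a r" by simp
  have "b - p = (b - a) - (r/(r+s)) *\<^sub>R (b - a)" by (simp add: p_def)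
  also have "\<dots> = (1 - r/(r+s)) *\<^sub>R (b - a)" by (simp add: scaleR_diff_left)
  also have "1 - r/(r+s) = s/(r+s)" using rs by (simp add: field_simps)
  finally have "norm (b - p) = (s/(r+s)) * norm (b - a)" using rs assms by simp
  then have "dist b p = (s/(r+s)) * dist a b" by (metis dist_norm dist_commute)
  also have "\<dots> \<le> (s/(r+s)) * (r+s)" using le rs assms by (intro mult_left_mono) auto
  also have "\<dots> = s" using rs by simp
  finally have 2: "p \<in> cball b s" by simp
  show False using 1 2 assms(1) by blast
qed

lemma norm_id:
  fixes u e :: "'a::euclidean_space"
  assumes "norm u = 1"
  shows "norm (A *\<^sub>R u - e)^2 = A^2 - 2*A*(u \<bullet> e) + norm e ^2"
proof -
  have "norm (A *\<^sub>R u - e)^2 = (A *\<^sub>R u - e) \<bullet> (A *\<^sub>R u - e)" by (simp add: power2_norm_eq_inner)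
  also have "\<dots> = A^2 * (u \<bullet> u) - 2*A*(u \<bullet> e) + e \<bullet> e"
    by (simp add: inner_diff_left inner_diff_right inner_commute power2_eq_square algebra_simps)
  also have "u \<bullet> u = 1" using assms by (simp add: power2_norm_eq_inner[symmetric])
  finally show ?thesis by (simp add: power2_norm_eq_inner)
qed



lemma core:
  fixes x1 x2 :: "real^3"
  assumes cov: "ball_cover \<sigma> \<eta> \<C>" and eta: "\<eta> > 0"
    and B1: "cball x1 r1 \<in> \<C>" and B2: "cball x2 r2 \<in> \<C>"
    and H: "\<And>D E. D \<in> \<C> \<Longrightarrow> E \<in> \<C> \<Longrightarrow> D \<inter> cball x1 r1 \<noteq> {} \<Longrightarrow> E \<inter> cball x2 r2 \<noteq> {} \<Longrightarrow> D \<inter> E = {}"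
  shows "\<exists>\<rho>. 1 \<le> \<rho> \<and> r2/\<eta>/\<eta> \<le> \<rho> \<and> (\<forall>c1 c2. 0 \<le> c1 \<longrightarrow> 0 \<le> c2 \<longrightarrow> c1^2 \<le> r1^2 + 2*r1*\<rho> \<longrightarrow> c2^2 \<le> r2^2 + 2*r2*\<rho> \<longrightarrow> c1 + c2 < dist x1 x2)"
proof -
  have r1: "r1 \<ge> 1" using radius_ge1[OF cov B1] .
  have r2: "r2 \<ge> 1" using radius_ge1[OF cov B2] .
  have x1in: "x1 \<in> cball x1 r1" using r1 by simp
  have x2in: "x2 \<in> cball x2 r2" using r2 by simp
  have disj12: "cball x1 r1 \<inter> cball x2 r2 = {}" using H[OF B1 B2] x1in x2in by blast
  define L where "L = dist x1 x2"
  have Lgt: "L > r1 + r2" using disj_dist[OF disj12] r1 r2 by (simp add: L_def)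
  have Lpos: "L > 0" using Lgt r1 r2 by simp
  define u where "u = (1/L) *\<^sub>R (x2 - x1)"
  have nx: "norm (x2 - x1) = L" by (simp add: L_def dist_norm norm_minus_commute)
  have nu: "norm u = 1" using Lpos nx by (simp add: u_def)
  have x21: "x2 = x1 + L *\<^sub>R u" using Lpos by (simp add: u_def)
  define p0 where "p0 = x1 + r1 *\<^sub>R u"
  define q0 where "q0 = x1 + (L - r2) *\<^sub>R u"
  have q0': "x2 - q0 = r2 *\<^sub>R u" unfolding q0_def x21 by (simp add: scaleR_diff_left)
  define seg where "seg = closed_segment p0 q0"
  have p0B1: "p0 \<in> cball x1 r1" using nu r1 by (simp add: p0_def dist_norm)
  have q0B2: "q0 \<in> cball x2 r2" using nu r2 q0' by (simp add: dist_norm)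
  have p0seg: "p0 \<in> seg" and q0seg: "q0 \<in> seg" by (simp_all add: seg_def)
  define N where "N = {G\<in>\<C>. G \<inter> seg \<noteq> {}}"
  have "bounded seg" unfolding seg_def by (simp add: compact_imp_bounded)
  then obtain R w where "seg \<subseteq> cball w R" using bounded_subset_cball by blast
  then have finN: "finite N" unfolding N_def by (rule locfin[OF cov])
  have closedG: "closed G" if "G \<in> \<C>" for G
    using cov_ball[OF cov that] by auto
  define P where "P = \<Union>{G\<in>N. G \<inter> cball x2 r2 \<noteq> {}}"
  define Q where "Q = \<Union>{G\<in>N. G \<inter> cball x2 r2 = {}}"
  have "finite {G\<in>N. G \<inter> cball x2 r2 \<noteq> {}}" by (rule finite_subset[OF _ finN]) blast
  then have "closed P" unfolding P_def
    by (rule closed_Union) (use closedG N_def in auto)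
  have "finite {G\<in>N. G \<inter> cball x2 r2 = {}}" by (rule finite_subset[OF _ finN]) blast
  then have "closed Q" unfolding Q_def
    by (rule closed_Union) (use closedG N_def in auto)
  have segPQ: "seg \<subseteq> P \<union> Q"
  proof
    fix y assume y: "y \<in> seg"
    obtain G where G: "G \<in> \<C>" "y \<in> G" using cov_univ[OF cov] by blast
    then have "G \<in> N" using y unfolding N_def by blast
    then show "y \<in> P \<union> Q" unfolding P_def Q_def using G by blast
  qed
  have "cball x1 r1 \<in> N" using B1 p0B1 p0seg unfolding N_def by blast
  then have "p0 \<in> Q" using disj12 p0B1 unfolding Q_def by blast
  have "cball x2 r2 \<in> N" using B2 q0B2 q0seg unfolding N_def by blast
  then have "q0 \<in> P" using x2in q0B2 unfolding P_def by blast
  have "connected seg" by (simp add: seg_def)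
  then have "P \<inter> Q \<inter> seg \<noteq> {}"
    using \<open>closed P\<close> \<open>closed Q\<close> segPQ \<open>p0 \<in> Q\<close> \<open>q0 \<in> P\<close> p0seg q0seg
    unfolding connected_closed by blast
  then obtain z where z: "z \<in> P" "z \<in> Q" "z \<in> seg" by blast
  obtain E where E: "E \<in> \<C>" "E \<inter> cball x2 r2 \<noteq> {}" "z \<in> E"
    using z(1) unfolding P_def N_def by blast
  obtain F where F: "F \<in> \<C>" "F \<inter> cball x2 r2 = {}" "z \<in> F"
    using z(2) unfolding Q_def N_def by blast
  have F1: "F \<inter> cball x1 r1 = {}"
  proof (rule ccontr)
    assume "F \<inter> cball x1 r1 \<noteq> {}"
    then have "F \<inter> E = {}" using H[OF F(1) E(1) _ E(2)] by blast
    then show False using E(3) F(3) by blast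
  qed
  obtain c \<rho> where Fc: "F = cball c \<rho>" using cov_ball[OF cov F(1)] by blast
  obtain xe re where Ee: "E = cball xe re" using cov_ball[OF cov E(1)] by blast
  have \<rho>1: "\<rho> \<ge> 1" using radius_ge1[OF cov] F(1) Fc by blast
  have "r2/\<eta> \<le> re" using radius_ratio[OF cov, of xe re x2 r2] E B2 Ee by blast
  moreover have "F \<inter> E \<noteq> {}" using E(3) F(3) by blast
  then have "re/\<eta> \<le> \<rho>" using radius_ratio[OF cov, of c \<rho> xe re] E(1) F(1) Ee Fc by blast
  ultimately have \<rho>2: "r2/\<eta>/\<eta> \<le> \<rho>" using eta by (meson divide_right_mono less_imp_le order_trans)
  have d1: "dist x1 c > r1 + \<rho>" using disj_dist[of x1 r1 c \<rho>] F1 Fc r1 \<rho>1 by (simp add: Int_commute)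
  have d2: "dist x2 c > r2 + \<rho>" using disj_dist[of x2 r2 c \<rho>] F(2) Fc r2 \<rho>1 by (simp add: Int_commute)
  obtain lm where lam: "0 \<le> lm" "lm \<le> 1" "z = (1 - lm) *\<^sub>R p0 + lm *\<^sub>R q0"
    using z(3) unfolding seg_def in_segment by blast
  define A where "A = (1 - lm) * r1 + lm * (L - r2)"
  define B where "B = L - A"
  have zx1: "z = x1 + A *\<^sub>R u"
    unfolding lam(3) p0_def q0_def A_def by (simp add: algebra_simps)
  have Age: "A \<ge> r1"
  proof -
    have "lm * r1 \<le> lm * (L - r2)" using Lgt lam by (intro mult_left_mono) auto
    then show ?thesis unfolding A_def by (simp add: algebra_simps)
  qed
  have Ble: "A \<le> L - r2"
  proof -
    have "(1 - lm) * r1 \<le> (1 - lm) * (L - r2)" using Lgt lam by (intro mult_left_mono) auto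
    then show ?thesis unfolding A_def by (simp add: algebra_simps)
  qed
  have Apos: "A > 0" using Age r1 by simp
  have Bpos: "B > 0" using Ble r2 by (simp add: B_def)
  define e where "e = z - c"
  have ne: "norm e \<le> \<rho>" using F(3) Fc by (simp add: e_def dist_norm norm_minus_commute)
  have "c - x1 = A *\<^sub>R u - e" unfolding e_def zx1 by simp
  then have "(dist x1 c)^2 = A^2 - 2*A*(u \<bullet> e) + norm e ^2"
    using norm_id[OF nu, of A e] by (simp add: dist_norm norm_minus_commute)
  moreover have "(dist x1 c)^2 > (r1 + \<rho>)^2" using d1 r1 \<rho>1 by (intro power_strict_mono) auto
  ultimately have i1: "A^2 - 2*A*(u \<bullet> e) + norm e ^2 > (r1 + \<rho>)^2" by simp
  have "c - x2 = (-B) *\<^sub>R u - e" unfolding e_def B_def using zx1 x21 by (simp add: algebra_simps)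
  then have "(dist x2 c)^2 = (-B)^2 - 2*(-B)*(u \<bullet> e) + norm e ^2"
    using norm_id[OF nu, of "-B" e] by (simp add: dist_norm norm_minus_commute)
  moreover have "(dist x2 c)^2 > (r2 + \<rho>)^2" using d2 r2 \<rho>1 by (intro power_strict_mono) auto
  ultimately have i2: "B^2 + 2*B*(u \<bullet> e) + norm e ^2 > (r2 + \<rho>)^2" by simp
  have ne2: "norm e ^2 \<le> \<rho>^2" using ne by (intro power_mono) auto
  have "\<forall>c1 c2. 0 \<le> c1 \<longrightarrow> 0 \<le> c2 \<longrightarrow> c1^2 \<le> r1^2 + 2*r1*\<rho> \<longrightarrow> c2^2 \<le> r2^2 + 2*r2*\<rho> \<longrightarrow> c1 + c2 < dist x1 x2"
  proof (intro allI impI)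
    fix c1 c2 :: real
    assume "c1^2 \<le> r1^2 + 2*r1*\<rho>" "c2^2 \<le> r2^2 + 2*r2*\<rho>"
    from alg[OF Apos Bpos ne2 i1 i2 this] show "c1 + c2 < dist x1 x2"
      by (simp add: B_def L_def)
  qed
  then show ?thesis using \<rho>1 \<rho>2 by blast
qed



lemma layerP_sub: "A \<in> layerP \<C> B n \<Longrightarrow> A \<subseteq> layerB \<C> B n"
  by (cases n) auto

lemma layer_step: "D \<in> \<C> \<Longrightarrow> D \<inter> layerB \<C> B n \<noteq> {} \<Longrightarrow> D \<subseteq> layerB \<C> B (Suc n)"
  by auto

theorem lemma3p1:
  fixes \<sigma> \<eta> r\<^sub>1 r\<^sub>2 :: real and \<C> :: "(real^3) set set" and B :: "(real^3) set"
    and x\<^sub>1 x\<^sub>2 :: "real^3" and n :: nat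
  assumes "\<sigma> > 0" and "\<eta> > 0"
    and "ball_cover \<sigma> \<eta> \<C>"
    and "B \<in> \<C>"
    and "cball x\<^sub>1 r\<^sub>1 \<in> layerP \<C> B n"
    and "cball x\<^sub>2 r\<^sub>2 \<in> \<C>"
    and "cball x\<^sub>2 r\<^sub>2 \<subseteq> layerB \<C> B (n + 4)"
    and "\<not> cball x\<^sub>2 r\<^sub>2 \<subseteq> layerB \<C> B (n + 3)"
  shows "setdist (cball x\<^sub>1 r\<^sub>1) (cball x\<^sub>2 r\<^sub>2)
           \<ge> max ((sqrt (1 + 2 / \<eta>\<^sup>2) - 1) * (r\<^sub>1 + r\<^sub>2)) 1"
proof -
  note cov = assms(3) and eta = assms(2)
  have B1C: "cball x\<^sub>1 r\<^sub>1 \<in> \<C>"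
  proof (cases n)
    case 0 then show ?thesis using assms(4,5) by simp
  next
    case (Suc m) then show ?thesis using assms(5) by simp
  qed
  note B2C = assms(6)
  have H: "D \<inter> E = {}" if D: "D \<in> \<C>" and E: "E \<in> \<C>" and "D \<inter> cball x\<^sub>1 r\<^sub>1 \<noteq> {}"
    and "E \<inter> cball x\<^sub>2 r\<^sub>2 \<noteq> {}" for D E
  proof (rule ccontr)
    assume DE: "D \<inter> E \<noteq> {}"
    have "cball x\<^sub>1 r\<^sub>1 \<subseteq> layerB \<C> B n" using layerP_sub[OF assms(5)] .
    then have "D \<inter> layerB \<C> B n \<noteq> {}" using that(3) by blast
    then have "D \<subseteq> layerB \<C> B (Suc n)" using layer_step[OF D] by blast
    then have "E \<inter> layerB \<C> B (Suc n) \<noteq> {}" using DE by blast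
    then have "E \<subseteq> layerB \<C> B (Suc (Suc n))" using layer_step[OF E] by blast
    then have "cball x\<^sub>2 r\<^sub>2 \<inter> layerB \<C> B (Suc (Suc n)) \<noteq> {}" using that(4) by blast
    then have "cball x\<^sub>2 r\<^sub>2 \<subseteq> layerB \<C> B (Suc (Suc (Suc n)))" using layer_step[OF B2C] by blast
    then show False using assms(8) by (simp add: numeral_3_eq_3)
  qed
  have r1: "r\<^sub>1 \<ge> 1" using radius_ge1[OF cov B1C] .
  have r2: "r\<^sub>2 \<ge> 1" using radius_ge1[OF cov B2C] .
  have "\<exists>\<rho>. 1 \<le> \<rho> \<and> r\<^sub>1/\<eta>/\<eta> \<le> \<rho> \<and> r\<^sub>2/\<eta>/\<eta> \<le> \<rho> \<and> (\<forall>c1 c2. 0 \<le> c1 \<longrightarrow> 0 \<le> c2 \<longrightarrow> c1^2 \<le> r\<^sub>1^2 + 2*r\<^sub>1*\<rho> \<longrightarrow> c2^2 \<le> r\<^sub>2^2 + 2*r\<^sub>2*\<rho> \<longrightarrow> c1 + c2 < dist x\<^sub>1 x\<^sub>2)"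
  proof (cases "r\<^sub>1 \<le> r\<^sub>2")
    case True
    obtain \<rho> where \<rho>: "1 \<le> \<rho>" "r\<^sub>2/\<eta>/\<eta> \<le> \<rho>" "\<forall>c1 c2. 0 \<le> c1 \<longrightarrow> 0 \<le> c2 \<longrightarrow> c1^2 \<le> r\<^sub>1^2 + 2*r\<^sub>1*\<rho> \<longrightarrow> c2^2 \<le> r\<^sub>2^2 + 2*r\<^sub>2*\<rho> \<longrightarrow> c1 + c2 < dist x\<^sub>1 x\<^sub>2"
      using core[OF cov eta B1C B2C H] by blast
    have "r\<^sub>1/\<eta>/\<eta> \<le> r\<^sub>2/\<eta>/\<eta>" using True eta by (intro divide_right_mono) auto
    then show ?thesis using \<rho> by (meson order_trans)
  next
    case False
    have H': "D \<inter> E = {}" if "D \<in> \<C>" "E \<in> \<C>" "D \<inter> cball x\<^sub>2 r\<^sub>2 \<noteq> {}" "E \<inter> cball x\<^sub>1 r\<^sub>1 \<noteq> {}" for D E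
      using H[OF that(2,1,4,3)] by blast
    obtain \<rho> where \<rho>: "1 \<le> \<rho>" "r\<^sub>1/\<eta>/\<eta> \<le> \<rho>" "\<forall>c1 c2. 0 \<le> c1 \<longrightarrow> 0 \<le> c2 \<longrightarrow> c1^2 \<le> r\<^sub>2^2 + 2*r\<^sub>2*\<rho> \<longrightarrow> c2^2 \<le> r\<^sub>1^2 + 2*r\<^sub>1*\<rho> \<longrightarrow> c1 + c2 < dist x\<^sub>2 x\<^sub>1"
      using core[OF cov eta B2C B1C H'] by blast
    have "r\<^sub>2/\<eta>/\<eta> \<le> r\<^sub>1/\<eta>/\<eta>" using False eta by (intro divide_right_mono) auto
    moreover have "\<forall>c1 c2. 0 \<le> c1 \<longrightarrow> 0 \<le> c2 \<longrightarrow> c1^2 \<le> r\<^sub>1^2 + 2*r\<^sub>1*\<rho> \<longrightarrow> c2^2 \<le> r\<^sub>2^2 + 2*r\<^sub>2*\<rho> \<longrightarrow> c1 + c2 < dist x\<^sub>1 x\<^sub>2"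
      using \<rho>(3) by (metis add.commute dist_commute)
    ultimately show ?thesis using \<rho> by (meson order_trans)
  qed
  then obtain \<rho> where \<rho>1: "1 \<le> \<rho>" and \<rho>a: "r\<^sub>1/\<eta>/\<eta> \<le> \<rho>" and \<rho>b: "r\<^sub>2/\<eta>/\<eta> \<le> \<rho>"
    and key: "\<And>c1 c2. 0 \<le> c1 \<Longrightarrow> 0 \<le> c2 \<Longrightarrow> c1^2 \<le> r\<^sub>1^2 + 2*r\<^sub>1*\<rho> \<Longrightarrow> c2^2 \<le> r\<^sub>2^2 + 2*r\<^sub>2*\<rho> \<Longrightarrow> c1 + c2 < dist x\<^sub>1 x\<^sub>2"
    by blast
  define k where "k = sqrt (1 + 2 / \<eta>\<^sup>2)"
  have k0: "k \<ge> 0" unfolding k_def by simp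
  have k2: "k^2 = 1 + 2 / \<eta>\<^sup>2" unfolding k_def by (simp add: add_pos_nonneg)
  have ck: "(r * k)^2 \<le> r^2 + 2*r*\<rho>" if r: "r \<ge> 1" "r/\<eta>/\<eta> \<le> \<rho>" for r
  proof -
    have "(r * k)^2 = r^2 * (1 + 2 / \<eta>\<^sup>2)" using k2 by (simp add: power_mult_distrib)
    also have "\<dots> = r^2 + 2*r*(r/\<eta>/\<eta>)" using eta by (simp add: field_simps power2_eq_square)
    also have "\<dots> \<le> r^2 + 2*r*\<rho>" using r by (intro add_left_mono mult_left_mono) auto
    finally show ?thesis .
  qed
  have c1: "(r + 1/2)^2 \<le> r^2 + 2*r*\<rho>" if r: "r \<ge> 1" for r :: real
  proof -
    have "r * 1 \<le> r * \<rho>" using r \<rho>1 by (intro mult_left_mono) auto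
    moreover have "(r + 1/2)^2 = r^2 + r + 1/4" by (simp add: power2_eq_square field_simps)
    ultimately show ?thesis using r by linarith
  qed
  have dk: "r\<^sub>1 * k + r\<^sub>2 * k < dist x\<^sub>1 x\<^sub>2"
    using key[OF _ _ ck[OF r1 \<rho>a] ck[OF r2 \<rho>b]] k0 r1 r2 by simp
  have d1: "(r\<^sub>1 + 1/2) + (r\<^sub>2 + 1/2) < dist x\<^sub>1 x\<^sub>2"
    using key[OF _ _ c1[OF r1] c1[OF r2]] r1 r2 by simp
  have sd: "dist x\<^sub>1 x\<^sub>2 - r\<^sub>1 - r\<^sub>2 \<le> setdist (cball x\<^sub>1 r\<^sub>1) (cball x\<^sub>2 r\<^sub>2)"
  proof (rule le_setdistI)
    show "cball x\<^sub>1 r\<^sub>1 \<noteq> {}" using r1 by simp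
    show "cball x\<^sub>2 r\<^sub>2 \<noteq> {}" using r2 by simp
    fix p q assume "p \<in> cball x\<^sub>1 r\<^sub>1" "q \<in> cball x\<^sub>2 r\<^sub>2"
    then have "dist x\<^sub>1 p \<le> r\<^sub>1" "dist q x\<^sub>2 \<le> r\<^sub>2" by (auto simp: dist_commute)
    moreover have "dist x\<^sub>1 x\<^sub>2 \<le> dist x\<^sub>1 p + dist p x\<^sub>2" by (rule dist_triangle)
    moreover have "dist p x\<^sub>2 \<le> dist p q + dist q x\<^sub>2" by (rule dist_triangle)
    ultimately show "dist x\<^sub>1 x\<^sub>2 - r\<^sub>1 - r\<^sub>2 \<le> dist p q" by linarith
  qed
  have "(k - 1) * (r\<^sub>1 + r\<^sub>2) \<le> dist x\<^sub>1 x\<^sub>2 - r\<^sub>1 - r\<^sub>2" using dk by (simp add: algebra_simps)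
  moreover have "1 \<le> dist x\<^sub>1 x\<^sub>2 - r\<^sub>1 - r\<^sub>2" using d1 by simp
  ultimately show ?thesis using sd unfolding k_def by simp
qed


end
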